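(* Let $X,Y:[0,1]\to\mathbb{R}^2$ be independent planar Brownian motions started at $x,y$ under $\mathbb{P}_{x,y}$. For an integer $T\geq1$, $\epsilon>0$ and $j\in\{1,\dots,T\}$, let $T_j=\{i\in\{1,\dots,T\}:|X_{(i-1)T^{-1}}-Y_{(j-1)T^{-1}}|\leq T^{-\frac12+\epsilon}\}$. Then for all $r>0$ and $\epsilon>0$ there exists $C$ such that for all $T$ and all $j\in\{1,\dots,T\}$, $$\sup_{x,y}\mathbb{P}_{x,y}(\#T_j\geq T^{3\epsilon})\leq CT^{-r},$$ and moreover $$\sup_{x,y}\mathbb{P}_{x,y}\Big(\#\{(i,j)\in\{1,\dots,T\}^2:|X_{(i-1)T^{-1}}-Y_{(j-1)T^{-1}}|\leq T^{-\frac12+\epsilon}\}\geq T^{1+3\epsilon}\Big)\leq CT^{-r}.$$ *)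

theory Defs
  imports "HOL-Probability.Probability"
begin

text \<open>Planar Brownian motion on the time interval [0,1], started at x, on the
  probability space M (points of the plane are modelled as real \<times> real with the
  Euclidean norm).\<close>
definition planar_BM :: "'w measure \<Rightarrow> (real \<Rightarrow> 'w \<Rightarrow> real \<times> real) \<Rightarrow> real \<times> real \<Rightarrow> bool" where
  "planar_BM M X x \<longleftrightarrow>
     prob_space M \<and>
     (\<forall>t\<in>{0..1}. X t \<in> borel_measurable M) \<and>
     (AE \<omega> in M. X 0 \<omega> = x) \<and>
     (AE \<omega> in M. continuous_on {0..1} (\<lambda>t. X t \<omega>)) \<and>
     (\<forall>ts::real list. sorted_wrt (<) ts \<and> set ts \<subseteq> {0..1} \<longrightarrow>
        prob_space.indep_vars M (\<lambda>_. borel)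
          (\<lambda>k \<omega>. X (ts ! Suc k) \<omega> - X (ts ! k) \<omega>) {..<length ts - 1}) \<and>
     (\<forall>s t. 0 \<le> s \<and> s < t \<and> t \<le> 1 \<longrightarrow>
        distr M borel (\<lambda>\<omega>. X t \<omega> - X s \<omega>) =
        density lborel (\<lambda>z. ennreal (normal_density 0 (sqrt (t - s)) (fst z) *
                                     normal_density 0 (sqrt (t - s)) (snd z))))"

definition indep_planar_BMs ::
  "'w measure \<Rightarrow> (real \<Rightarrow> 'w \<Rightarrow> real \<times> real) \<Rightarrow> (real \<Rightarrow> 'w \<Rightarrow> real \<times> real)
     \<Rightarrow> real \<times> real \<Rightarrow> real \<times> real \<Rightarrow> bool" where
  "indep_planar_BMs M X Y x y \<longleftrightarrow>
     planar_BM M X x \<and> planar_BM M Y y \<and>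
     prob_space.indep_var M
       (Pi\<^sub>M {0..1} (\<lambda>_. borel)) (\<lambda>\<omega>. \<lambda>t\<in>{0..1}. X t \<omega>)
       (Pi\<^sub>M {0..1} (\<lambda>_. borel)) (\<lambda>\<omega>. \<lambda>t\<in>{0..1}. Y t \<omega>)"

definition close_set ::
  "(real \<Rightarrow> 'w \<Rightarrow> real \<times> real) \<Rightarrow> (real \<Rightarrow> 'w \<Rightarrow> real \<times> real) \<Rightarrow> nat \<Rightarrow> real \<Rightarrow> nat \<Rightarrow> 'w \<Rightarrow> nat set" where
  "close_set X Y T \<epsilon> j \<omega> = {i \<in> {1..T}.
      dist (X (real (i - 1) / real T) \<omega>) (Y (real (j - 1) / real T) \<omega>) \<le> real T powr (-1/2 + \<epsilon>)}"

definition close_pairs ::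
  "(real \<Rightarrow> 'w \<Rightarrow> real \<times> real) \<Rightarrow> (real \<Rightarrow> 'w \<Rightarrow> real \<times> real) \<Rightarrow> nat \<Rightarrow> real \<Rightarrow> 'w \<Rightarrow> (nat \<times> nat) set" where
  "close_pairs X Y T \<epsilon> \<omega> = {(i, j) \<in> {1..T} \<times> {1..T}.
      dist (X (real (i - 1) / real T) \<omega>) (Y (real (j - 1) / real T) \<omega>) \<le> real T powr (-1/2 + \<epsilon>)}"

end

theory Submission
  imports Defs
begin


definition gp :: "real \<Rightarrow> nat list \<Rightarrow> real" where
  "gp A l = (\<Prod>a<length l - 1. A / (real (l ! Suc a) - real (l ! a)))"

lemma gp_single: "gp A [a] = 1" by (simp add: gp_def)

lemma gp_Cons2: "gp A (a # b # l) = A / (real b - real a) * gp A (b # l)"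
proof -
  have "length (a # b # l) - 1 = Suc (length (b # l) - 1)" by simp
  then show ?thesis unfolding gp_def by (simp only: prod.lessThan_Suc_shift) simp
qed

lemma sorted_insert_min:
  assumes "finite S" "\<forall>x\<in>S. b < x"
  shows "sorted_list_of_set (insert b S) = b # sorted_list_of_set S"
proof -
  have "b \<notin> S" using assms by auto
  then have "sorted_list_of_set (insert b S) = insort b (sorted_list_of_set S)"
    using assms by (simp add: sorted_list_of_set_insert)
  also have "\<dots> = b # sorted_list_of_set S"
  proof (cases "sorted_list_of_set S")
    case Nil then show "insort b (sorted_list_of_set S) = b # sorted_list_of_set S" by simp
  next
    case (Cons c l)
    have "c \<in> S" using Cons assms(1) by (metis list.set_intros(1) set_sorted_list_of_set)
    then have "b < c" using assms by auto
    then show "insort b (sorted_list_of_set S) = b # sorted_list_of_set S" using Cons by auto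
  qed
  finally show ?thesis .
qed

lemma decomp:
  "bij_betw (\<lambda>(b,S'). insert b S') (SIGMA b:{a<..(T::nat)}. {S'. S' \<subseteq> {b<..T} \<and> card S' = k})
     {S. S \<subseteq> {a<..T} \<and> card S = Suc k}"
proof (rule bij_betw_byWitness[where f' = "\<lambda>S. (Min S, S - {Min S})"])
  show "\<forall>x\<in>SIGMA b:{a<..T}. {S'. S' \<subseteq> {b<..T} \<and> card S' = k}.
           (\<lambda>S. (Min S, S - {Min S})) ((\<lambda>(b, S'). insert b S') x) = x"
  proof (intro ballI)
    fix x assume "x \<in> (SIGMA b:{a<..T}. {S'. S' \<subseteq> {b<..T} \<and> card S' = k})"
    then obtain b S' where x: "x = (b, S')" and h: "b \<in> {a<..T}" "S' \<subseteq> {b<..T}" by auto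
    have fin: "finite S'" using h finite_subset by blast
    have m: "Min (insert b S') = b" using h fin by (intro Min_eqI) auto
    have "b \<notin> S'" using h by auto
    then show "(\<lambda>S. (Min S, S - {Min S})) ((\<lambda>(b, S'). insert b S') x) = x"
      using m h x by auto
  qed
  show "\<forall>S\<in>{S. S \<subseteq> {a<..T} \<and> card S = Suc k}. (\<lambda>(b, S'). insert b S') (Min S, S - {Min S}) = S"
  proof clarify
    fix S assume h: "S \<subseteq> {a<..T}" "card S = Suc k"
    then have "finite S" using finite_subset by blast
    then have "S \<noteq> {}" "finite S" using h by auto
    then show "insert (Min S) (S - {Min S}) = S" using Min_in by blast
  qed
  show "(\<lambda>(b, S'). insert b S') ` (SIGMA b:{a<..T}. {S'. S' \<subseteq> {b<..T} \<and> card S' = k})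
    \<subseteq> {S. S \<subseteq> {a<..T} \<and> card S = Suc k}"
  proof clarify
    fix b S' assume h: "b \<in> {a<..T}" "S' \<subseteq> {b<..T}" "k = card S'"
    have fin: "finite S'" using h finite_subset by blast
    have "b \<notin> S'" using h by auto
    then show "insert b S' \<subseteq> {a<..T} \<and> card (insert b S') = Suc (card S')"
      using h fin by auto
  qed
  show "(\<lambda>S. (Min S, S - {Min S})) ` {S. S \<subseteq> {a<..T} \<and> card S = Suc k}
    \<subseteq> (SIGMA b:{a<..T}. {S'. S' \<subseteq> {b<..T} \<and> card S' = k})"
  proof (intro subsetI)
    fix y assume "y \<in> (\<lambda>S. (Min S, S - {Min S})) ` {S. S \<subseteq> {a<..T} \<and> card S = Suc k}"
    then obtain S where y: "y = (Min S, S - {Min S})" and h: "S \<subseteq> {a<..T}" "card S = Suc k" by auto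
    then have fin: "finite S" using finite_subset by blast
    then have ne: "S \<noteq> {}" using h by auto
    have mi: "Min S \<in> S" using ne fin by simp
    moreover have "\<forall>x\<in>S - {Min S}. Min S < x" using fin
      by (metis DiffE Min_le insertI1 order_le_neq_trans)
    moreover have "card (S - {Min S}) = k" using h fin mi by auto
    ultimately show "y \<in> (SIGMA b:{a<..T}. {S'. S' \<subseteq> {b<..T} \<and> card S' = k})"
      using h y by (auto simp: subset_iff)
  qed
qed

lemma sum_decomp:
  "(\<Sum>S\<in>{S. S \<subseteq> {a<..(T::nat)} \<and> card S = Suc k}. f S) =
   (\<Sum>b\<in>{a<..T}. \<Sum>S'\<in>{S'. S' \<subseteq> {b<..T} \<and> card S' = k}. f (insert b S'))"
proof -
  have "(\<Sum>S\<in>{S. S \<subseteq> {a<..T} \<and> card S = Suc k}. f S) =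
    (\<Sum>x\<in>(SIGMA b:{a<..T}. {S'. S' \<subseteq> {b<..T} \<and> card S' = k}). f ((\<lambda>(b,S'). insert b S') x))"
    using sum.reindex_bij_betw[OF decomp, symmetric] by blast
  also have "\<dots> = (\<Sum>b\<in>{a<..T}. \<Sum>S'\<in>{S'. S' \<subseteq> {b<..T} \<and> card S' = k}. f (insert b S'))"
  proof -
    have "\<forall>b\<in>{a<..T}. finite {S'. S' \<subseteq> {b<..T} \<and> card S' = k}" by auto
    then show ?thesis by (subst sum.Sigma) (auto simp: case_prod_beta)
  qed
  finally show ?thesis .
qed

lemma harm_shift: "(\<Sum>b\<in>{a<..(T::nat)}. 1 / (real b - real a)) \<le> harm T"
proof -
  have "(\<Sum>b\<in>{a<..T}. 1 / (real b - real a)) = (\<Sum>m\<in>{1..T-a}. 1 / real m)"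
  proof (rule sum.reindex_bij_witness[where i = "\<lambda>m. m + a" and j = "\<lambda>b. b - a"])
  qed (auto simp: of_nat_diff)
  also have "\<dots> = harm (T - a)" by (simp add: harm_def divide_inverse)
  also have "\<dots> \<le> harm T" by (rule harm_mono) simp
  finally show ?thesis .
qed

lemma harm_nonneg': "0 \<le> (harm n :: real)"
  unfolding harm_def by (intro sum_nonneg) auto

lemma comb_bound:
  assumes A: "A \<ge> 0"
  shows "(\<Sum>S\<in>{S. S \<subseteq> {a<..(T::nat)} \<and> card S = k}. gp A (a # sorted_list_of_set S)) \<le> (A * harm T) ^ k"
  using assms
proof (induction k arbitrary: a)
  case 0
  have "{S. S \<subseteq> {a<..T} \<and> card S = 0} = {{}}"
    by (auto dest: finite_subset[OF _ finite_greaterThanAtMost])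
  then show ?case by (simp add: gp_single)
next
  case (Suc k)
  have "(\<Sum>S\<in>{S. S \<subseteq> {a<..T} \<and> card S = Suc k}. gp A (a # sorted_list_of_set S)) =
     (\<Sum>b\<in>{a<..T}. \<Sum>S'\<in>{S'. S' \<subseteq> {b<..T} \<and> card S' = k}. gp A (a # sorted_list_of_set (insert b S')))"
    by (rule sum_decomp)
  also have "\<dots> = (\<Sum>b\<in>{a<..T}. \<Sum>S'\<in>{S'. S' \<subseteq> {b<..T} \<and> card S' = k}.
        A / (real b - real a) * gp A (b # sorted_list_of_set S'))"
  proof (intro sum.cong refl)
    fix b S' assume "b \<in> {a<..T}" "S' \<in> {S'. S' \<subseteq> {b<..T} \<and> card S' = k}"
    then have "finite S'" "\<forall>x\<in>S'. b < x" by (auto intro: finite_subset)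
    then show "gp A (a # sorted_list_of_set (insert b S')) = A / (real b - real a) * gp A (b # sorted_list_of_set S')"
      by (subst sorted_insert_min) (auto simp: gp_Cons2)
  qed
  also have "\<dots> = (\<Sum>b\<in>{a<..T}. A / (real b - real a) * (\<Sum>S'\<in>{S'. S' \<subseteq> {b<..T} \<and> card S' = k}.
        gp A (b # sorted_list_of_set S')))"
    by (simp add: sum_distrib_left)
  also have "\<dots> \<le> (\<Sum>b\<in>{a<..T}. A / (real b - real a) * (A * harm T) ^ k)"
    by (intro sum_mono mult_left_mono Suc.IH Suc.prems) (use Suc.prems in auto)
  also have "\<dots> = A * (A * harm T) ^ k * (\<Sum>b\<in>{a<..T}. 1 / (real b - real a))"
    by (simp add: sum_distrib_left)
  also have "\<dots> \<le> A * (A * harm T) ^ k * harm T"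
    by (intro mult_left_mono harm_shift) (use Suc.prems harm_nonneg' in auto)
  finally show ?case by (simp add: algebra_simps)
qed

lemma comb_top:
  assumes A: "A \<ge> 0"
  shows "(\<Sum>S\<in>{S. S \<subseteq> {0<..(T::nat)} \<and> card S = Suc k}. gp A (sorted_list_of_set S)) \<le> real T * (A * harm T) ^ k"
proof -
  have "(\<Sum>S\<in>{S. S \<subseteq> {0<..(T::nat)} \<and> card S = Suc k}. gp A (sorted_list_of_set S)) =
     (\<Sum>b\<in>{0<..T}. \<Sum>S'\<in>{S'. S' \<subseteq> {b<..T} \<and> card S' = k}. gp A (sorted_list_of_set (insert b S')))"
    by (rule sum_decomp)
  also have "\<dots> = (\<Sum>b\<in>{0<..T}. \<Sum>S'\<in>{S'. S' \<subseteq> {b<..T} \<and> card S' = k}. gp A (b # sorted_list_of_set S'))"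
  proof (intro sum.cong refl)
    fix b S' assume "b \<in> {0<..T}" "S' \<in> {S'. S' \<subseteq> {b<..T} \<and> card S' = k}"
    then have "finite S'" "\<forall>x\<in>S'. b < x" by (auto intro: finite_subset)
    then show "gp A (sorted_list_of_set (insert b S')) = gp A (b # sorted_list_of_set S')"
      by (subst sorted_insert_min) auto
  qed
  also have "\<dots> \<le> (\<Sum>b\<in>{0<..T}. (A * harm T) ^ k)"
    by (intro sum_mono comb_bound A)
  finally show ?thesis by simp
qed



lemma normal_density_le:
  assumes "\<sigma> > 0"
  shows "normal_density 0 \<sigma> a \<le> 1 / sqrt (2 * pi * \<sigma>\<^sup>2)"
proof -
  have "exp (- ((a - 0)\<^sup>2) / (2 * \<sigma>\<^sup>2)) \<le> 1" using assms by simp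
  moreover have "0 \<le> 1 / sqrt (2 * pi * \<sigma>\<^sup>2)" by simp
  ultimately show ?thesis unfolding normal_density_def
    using mult_left_mono[of "exp (- ((a - 0)\<^sup>2) / (2 * \<sigma>\<^sup>2))" 1 "1 / sqrt (2 * pi * \<sigma>\<^sup>2)"] by simp
qed

lemma gauss_ball:
  assumes s: "\<sigma> > 0" and d: "\<delta> \<ge> 0"
  shows "emeasure (density lborel (\<lambda>z::real\<times>real. ennreal (normal_density 0 \<sigma> (fst z) * normal_density 0 \<sigma> (snd z))))
           (cball 0 \<delta>) \<le> ennreal (\<delta>\<^sup>2 / \<sigma>\<^sup>2)"
proof -
  define c where "c = 1 / (2 * pi * \<sigma>\<^sup>2)"
  define B where "B = {-\<delta>..\<delta>} \<times> {-\<delta>..\<delta>::real}"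
  have c0: "c \<ge> 0" unfolding c_def by simp
  have fle: "normal_density 0 \<sigma> a * normal_density 0 \<sigma> b \<le> c" for a b
  proof -
    have "normal_density 0 \<sigma> a * normal_density 0 \<sigma> b \<le> (1 / sqrt (2 * pi * \<sigma>\<^sup>2)) * (1 / sqrt (2 * pi * \<sigma>\<^sup>2))"
      by (intro mult_mono normal_density_le s normal_density_nonneg) simp
    also have "\<dots> = 1 / (sqrt (2 * pi * \<sigma>\<^sup>2) * sqrt (2 * pi * \<sigma>\<^sup>2))" by simp
    also have "sqrt (2 * pi * \<sigma>\<^sup>2) * sqrt (2 * pi * \<sigma>\<^sup>2) = 2 * pi * \<sigma>\<^sup>2"
      by (rule real_sqrt_mult_self[THEN trans]) simp
    also have "1 / (2 * pi * \<sigma>\<^sup>2) = c" unfolding c_def ..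
    finally show ?thesis .
  qed
  have sub: "cball (0::real\<times>real) \<delta> \<subseteq> B"
  proof
    fix z :: "real \<times> real" assume "z \<in> cball 0 \<delta>"
    then have n: "norm z \<le> \<delta>" by simp
    have "\<bar>fst z\<bar> \<le> norm z" using norm_fst_le[of "fst z" "snd z"] by simp
    moreover have "\<bar>snd z\<bar> \<le> norm z" using norm_snd_le[of "snd z" "fst z"] by simp
    ultimately
    show "z \<in> B" using n unfolding B_def by (cases z) auto
  qed
  have "emeasure (density lborel (\<lambda>z::real\<times>real. ennreal (normal_density 0 \<sigma> (fst z) * normal_density 0 \<sigma> (snd z))))
           (cball 0 \<delta>) = (\<integral>\<^sup>+ z. ennreal (normal_density 0 \<sigma> (fst z) * normal_density 0 \<sigma> (snd z)) * indicator (cball 0 \<delta>) z \<partial>lborel)"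
  proof (rule emeasure_density)
    show "(\<lambda>z::real\<times>real. ennreal (normal_density 0 \<sigma> (fst z) * normal_density 0 \<sigma> (snd z))) \<in> borel_measurable lborel"
    proof -
      have h: "(\<lambda>z::real\<times>real. normal_density 0 \<sigma> (fst z) * normal_density 0 \<sigma> (snd z)) \<in> borel_measurable borel"
        by (rule borel_measurable_continuous_onI) (unfold normal_density_def, intro continuous_intros, use s in auto)
      have "(\<lambda>z::real\<times>real. ennreal (normal_density 0 \<sigma> (fst z) * normal_density 0 \<sigma> (snd z))) \<in> borel_measurable borel"
        using h by measurable
      then show ?thesis by simp
    qed
  qed auto
  also have "\<dots> \<le> (\<integral>\<^sup>+ z. ennreal c * indicator B z \<partial>lborel)"
    using sub fle by (intro nn_integral_mono) (auto split: split_indicator simp: ennreal_leI)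
  also have "\<dots> = ennreal c * emeasure lborel B"
    by (rule nn_integral_cmult_indicator) (auto simp: B_def intro!: borel_closed closed_Times)
  also have "emeasure lborel B = emeasure (lborel \<Otimes>\<^sub>M lborel) B" by (simp add: lborel_prod)
  also have "\<dots> = emeasure lborel {-\<delta>..\<delta>} * emeasure lborel {-\<delta>..\<delta>}"
    unfolding B_def by (rule lborel.emeasure_pair_measure_Times) auto
  also have "\<dots> = ennreal (2*\<delta>) * ennreal (2*\<delta>)" using d by simp
  also have "\<dots> = ennreal ((2*\<delta>) * (2*\<delta>))" using d by (simp only: ennreal_mult[symmetric])
  also have "ennreal c * \<dots> = ennreal (c * (4 * \<delta>\<^sup>2))" using c0 d
    by (simp add: ennreal_mult[symmetric] power2_eq_square)
  also have "\<dots> \<le> ennreal (\<delta>\<^sup>2 / \<sigma>\<^sup>2)"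
  proof (rule ennreal_leI)
    have "c * (4 * \<delta>\<^sup>2) = (2 / pi) * (\<delta>\<^sup>2 / \<sigma>\<^sup>2)" unfolding c_def using s by (simp add: field_simps)
    also have "\<dots> \<le> 1 * (\<delta>\<^sup>2 / \<sigma>\<^sup>2)" using pi_gt3 by (intro mult_right_mono) auto
    finally show "c * (4 * \<delta>\<^sup>2) \<le> \<delta>\<^sup>2 / \<sigma>\<^sup>2" by simp
  qed
  finally show ?thesis .
qed



lemma planar_BM_D:
  assumes "planar_BM M X x"
  shows "prob_space M" "\<And>t. t \<in> {0..1} \<Longrightarrow> X t \<in> borel_measurable M"
    "\<And>ts. sorted_wrt (<) ts \<Longrightarrow> set ts \<subseteq> {0..1} \<Longrightarrow>
        prob_space.indep_vars M (\<lambda>_. borel) (\<lambda>k \<omega>. X (ts ! Suc k) \<omega> - X (ts ! k) \<omega>) {..<length ts - 1}"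
    "\<And>s t. 0 \<le> s \<Longrightarrow> s < t \<Longrightarrow> t \<le> 1 \<Longrightarrow>
        distr M borel (\<lambda>\<omega>. X t \<omega> - X s \<omega>) =
        density lborel (\<lambda>z. ennreal (normal_density 0 (sqrt (t - s)) (fst z) *
                                     normal_density 0 (sqrt (t - s)) (snd z)))"
  using assms unfolding planar_BM_def by auto

lemma meas_dist_le:
  fixes f g :: "'w \<Rightarrow> real \<times> real"
  assumes [measurable]: "f \<in> borel_measurable M" "g \<in> borel_measurable M"
  shows "{\<omega>\<in>space M. dist (f \<omega>) (g \<omega>) \<le> c} \<in> sets M"
  by measurable

lemma bm_incr:
  assumes BM: "planar_BM M X x" and st: "0 \<le> s" "s < t" "t \<le> 1" and d: "\<delta> \<ge> 0"
  shows "measure M {\<omega>\<in>space M. dist (X t \<omega>) (X s \<omega>) \<le> \<delta>} \<le> \<delta>\<^sup>2 / (t - s)"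
proof -
  note D = planar_BM_D[OF BM]
  define g where "g = (\<lambda>\<omega>. X t \<omega> - X s \<omega>)"
  have mt: "X t \<in> borel_measurable M" and ms: "X s \<in> borel_measurable M" using D(2) st by auto
  have gm: "g \<in> borel_measurable M" unfolding g_def using mt ms by (rule borel_measurable_diff)
  have eq: "{\<omega>\<in>space M. dist (X t \<omega>) (X s \<omega>) \<le> \<delta>} = g -` cball 0 \<delta> \<inter> space M"
  proof -
    have "\<And>\<omega>. dist (X t \<omega>) (X s \<omega>) \<le> \<delta> \<longleftrightarrow> g \<omega> \<in> cball 0 \<delta>"
      by (simp only: g_def mem_cball_0 dist_norm)
    then show ?thesis by blast
  qed
  have "measure M (g -` cball 0 \<delta> \<inter> space M) = measure (distr M borel g) (cball 0 \<delta>)"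
    by (rule measure_distr[symmetric]) (use gm in auto)
  also have "distr M borel g = density lborel (\<lambda>z. ennreal (normal_density 0 (sqrt (t - s)) (fst z) *
                                     normal_density 0 (sqrt (t - s)) (snd z)))"
    unfolding g_def by (rule D(4)) (use st in auto)
  also have "measure \<dots> (cball 0 \<delta>) \<le> \<delta>\<^sup>2 / (t - s)"
  proof -
    have g: "emeasure (density lborel (\<lambda>z. ennreal (normal_density 0 (sqrt (t - s)) (fst z) *
                                     normal_density 0 (sqrt (t - s)) (snd z)))) (cball 0 \<delta>)
       \<le> ennreal (\<delta>\<^sup>2 / (sqrt (t - s))\<^sup>2)" by (rule gauss_ball) (use st d in auto)
    have "(sqrt (t - s))\<^sup>2 = t - s" using st by simp
    then show ?thesis unfolding measure_def using g st d by (intro enn2real_leI) auto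
  qed
  finally show ?thesis using eq by simp
qed

lemma card_filter_sum:
  assumes "finite A"
  shows "real (card {i\<in>A. P i}) = (\<Sum>i\<in>A. if P i then 1 else 0)"
proof -
  have "real (card {i\<in>A. P i}) = (\<Sum>i\<in>{i\<in>A. P i}. 1)" by simp
  also have "\<dots> = (\<Sum>i\<in>A. if P i then 1 else 0)" using assms by (rule sum.inter_filter)
  finally show ?thesis .
qed

lemma key_j:
  fixes X Y :: "real \<Rightarrow> 'w \<Rightarrow> real \<times> real" and T k :: nat and K \<epsilon> :: real
  assumes BM: "planar_BM M X x" and YM: "\<And>t. t\<in>{0..1} \<Longrightarrow> Y t \<in> borel_measurable M"
    and T: "T \<ge> 1" and j: "j \<in> {1..T}" and K: "K \<ge> real (Suc k)"
  shows "measure M {\<omega>\<in>space M. K \<le> real (card (close_set X Y T \<epsilon> j \<omega>))} * (K / real (Suc k)) ^ Suc k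
     \<le> real T * (4 * (real T powr (-1/2+\<epsilon>))\<^sup>2 * real T * harm T) ^ k"
proof -
  note D = planar_BM_D[OF BM]
  interpret P: prob_space M by (rule D(1))
  define \<rho> where "\<rho> = real T powr (-1/2+\<epsilon>)"
  define \<tau> where "\<tau> = (\<lambda>i::nat. real (i-1) / real T)"
  define A where "A = 4 * \<rho>\<^sup>2 * real T"
  define SS where "SS = {S. S \<subseteq> {0<..T} \<and> card S = Suc k}"
  define F where "F = (\<lambda>S. {\<omega>\<in>space M. \<forall>a\<in>{..<k}. dist (X (\<tau> (sorted_list_of_set S ! Suc a)) \<omega>) (X (\<tau> (sorted_list_of_set S ! a)) \<omega>) \<le> 2*\<rho>})"
  define E where "E = {\<omega>\<in>space M. K \<le> real (card (close_set X Y T \<epsilon> j \<omega>))}"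
  define c where "c = (K / real (Suc k)) ^ Suc k"
  define G where "G = (\<lambda>i. {\<omega>\<in>space M. dist (X (\<tau> i) \<omega>) (Y (\<tau> j) \<omega>) \<le> \<rho>})"
  have Tpos: "real T > 0" using T by simp
  have tau01: "\<tau> i \<in> {0..1}" if "i \<in> {1..T}" for i
    using that Tpos by (auto simp: \<tau>_def field_simps)
  have tau_diff: "\<tau> i' - \<tau> i = (real i' - real i) / real T" if "i \<ge> 1" "i' \<ge> 1" for i i'
    using that by (simp add: \<tau>_def of_nat_diff diff_divide_distrib)
  have tau_less: "\<tau> i < \<tau> i'" if "i \<ge> 1" "i < i'" for i i'
  proof -
    have "\<tau> i' - \<tau> i > 0" using that Tpos by (subst tau_diff) auto
    then show ?thesis by simp
  qed
  have Xm: "X (\<tau> i) \<in> borel_measurable M" if "i \<in> {1..T}" for i using D(2) tau01 that by blast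
  have Ym: "Y (\<tau> j) \<in> borel_measurable M" using YM tau01 j by blast
  have Gm: "G i \<in> sets M" if "i \<in> {1..T}" for i unfolding G_def by (rule meas_dist_le[OF Xm[OF that] Ym])
  have cs: "close_set X Y T \<epsilon> j \<omega> = {i\<in>{1..T}. dist (X (\<tau> i) \<omega>) (Y (\<tau> j) \<omega>) \<le> \<rho>}" for \<omega>
    unfolding close_set_def \<tau>_def \<rho>_def ..
  have card_eq: "real (card (close_set X Y T \<epsilon> j \<omega>)) = (\<Sum>i\<in>{1..T}. indicator (G i) \<omega>)" if "\<omega> \<in> space M" for \<omega>
  proof -
    have "real (card (close_set X Y T \<epsilon> j \<omega>)) = (\<Sum>i\<in>{1..T}. if dist (X (\<tau> i) \<omega>) (Y (\<tau> j) \<omega>) \<le> \<rho> then 1 else 0)"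
      unfolding cs by (rule card_filter_sum) simp
    also have "\<dots> = (\<Sum>i\<in>{1..T}. indicator (G i) \<omega>)"
      by (intro sum.cong refl) (simp add: G_def that indicator_def)
    finally show ?thesis .
  qed
  have hm: "(\<lambda>\<omega>. \<Sum>i\<in>{1..T}. indicator (G i) \<omega> :: real) \<in> borel_measurable M"
    by (intro borel_measurable_sum borel_measurable_indicator Gm) auto
  have E_eq: "E = {\<omega>\<in>space M. K \<le> (\<Sum>i\<in>{1..T}. indicator (G i) \<omega>)}"
    unfolding E_def using card_eq by auto
  have Em: "E \<in> sets M" unfolding E_eq using hm by measurable
  have Sfacts: "finite S" "S \<subseteq> {1..T}" "length (sorted_list_of_set S) = Suc k"
      "set (sorted_list_of_set S) = S" "sorted_wrt (<) (sorted_list_of_set S)" if "S \<in> SS" for S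
  proof -
    show fin: "finite S" using that unfolding SS_def using finite_subset by blast
    show "S \<subseteq> {1..T}" using that unfolding SS_def by auto
    show "length (sorted_list_of_set S) = Suc k" using that unfolding SS_def by simp
    show "set (sorted_list_of_set S) = S" using fin by simp
    show "sorted_wrt (<) (sorted_list_of_set S)" by (rule strict_sorted_list_of_set)
  qed
  have elem: "sorted_list_of_set S ! a \<in> {1..T}" if "S \<in> SS" "a \<le> k" for S a
  proof -
    have "sorted_list_of_set S ! a \<in> set (sorted_list_of_set S)"
      using that Sfacts(3)[OF that(1)] by (intro nth_mem) auto
    then show ?thesis using Sfacts(2,4)[OF that(1)] by auto
  qed
  have lt: "sorted_list_of_set S ! a < sorted_list_of_set S ! Suc a" if "S \<in> SS" "a < k" for S a
    using Sfacts(3,5)[OF that(1)] that(2) by (simp add: sorted_wrt_nth_less)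
  have Fm: "F S \<in> sets M" if "S \<in> SS" for S
    unfolding F_def
    by (intro sets.sets_Collect_finite_All meas_dist_le Xm elem[OF that]) auto
  have finSS: "finite SS" unfolding SS_def by (rule finite_subset[of _ "Pow {0<..T}"]) auto
  have pw: "indicator E \<omega> * c \<le> (\<Sum>S\<in>SS. indicator (F S) \<omega>)" if \<omega>: "\<omega> \<in> space M" for \<omega>
  proof (cases "\<omega> \<in> E")
    case False
    then show ?thesis by (simp add: sum_nonneg)
  next
    case True
    define C where "C = close_set X Y T \<epsilon> j \<omega>"
    define N where "N = card C"
    have NK: "K \<le> real N" using True unfolding E_def N_def C_def by auto
    have C1: "C \<subseteq> {1..T}" unfolding C_def cs by auto
    have finC: "finite C" using C1 finite_subset by blast
    have kN: "Suc k \<le> N" using NK K by linarith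
    have "c \<le> (real N / real (Suc k)) ^ Suc k"
      unfolding c_def using K NK by (intro power_mono divide_right_mono) auto
    also have "\<dots> \<le> real (N choose Suc k)" by (rule binomial_ge_n_over_k_pow_k[OF kN])
    also have "N choose Suc k = card {S. S \<subseteq> C \<and> card S = Suc k}"
      unfolding N_def by (rule n_subsets[symmetric, OF finC])
    also have "real \<dots> = (\<Sum>S\<in>{S. S \<subseteq> C \<and> card S = Suc k}. indicator (F S) \<omega>)"
    proof -
      have "real (card {S. S \<subseteq> C \<and> card S = Suc k}) = (\<Sum>S\<in>{S. S \<subseteq> C \<and> card S = Suc k}. 1)" by simp
      also have "\<dots> = (\<Sum>S\<in>{S. S \<subseteq> C \<and> card S = Suc k}. indicator (F S) \<omega>)"
      proof (intro sum.cong refl)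
        fix S assume "S \<in> {S. S \<subseteq> C \<and> card S = Suc k}"
        then have SC: "S \<subseteq> C" and SSS: "S \<in> SS" using C1 unfolding SS_def by auto
        have "\<omega> \<in> F S" unfolding F_def
        proof (intro CollectI conjI ballI \<omega>)
          fix a assume a: "a \<in> {..<k}"
          let ?l = "sorted_list_of_set S"
          have m1: "?l ! a \<in> S" "?l ! Suc a \<in> S"
            using Sfacts(3,4)[OF SSS] a by (metis lessThan_iff less_SucI nth_mem Suc_mono)+
          then have "?l ! a \<in> C" "?l ! Suc a \<in> C" using SC by auto
          then have d1: "dist (X (\<tau> (?l ! a)) \<omega>) (Y (\<tau> j) \<omega>) \<le> \<rho>"
            and d2: "dist (X (\<tau> (?l ! Suc a)) \<omega>) (Y (\<tau> j) \<omega>) \<le> \<rho>"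
            unfolding C_def cs by auto
          have "dist (X (\<tau> (?l ! Suc a)) \<omega>) (X (\<tau> (?l ! a)) \<omega>)
              \<le> dist (X (\<tau> (?l ! Suc a)) \<omega>) (Y (\<tau> j) \<omega>) + dist (X (\<tau> (?l ! a)) \<omega>) (Y (\<tau> j) \<omega>)"
            by (rule dist_triangle2)
          then show "dist (X (\<tau> (?l ! Suc a)) \<omega>) (X (\<tau> (?l ! a)) \<omega>) \<le> 2 * \<rho>" using d1 d2 by simp
        qed
        then show "1 = indicator (F S) \<omega>" by simp
      qed
      finally show ?thesis .
    qed
    also have "\<dots> \<le> (\<Sum>S\<in>SS. indicator (F S) \<omega>)"
      by (rule sum_mono2[OF finSS]) (use C1 in \<open>auto simp: SS_def\<close>)
    finally show ?thesis using True by simp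
  qed
  have indep_bound: "measure M (F S) \<le> gp A (sorted_list_of_set S)" if SSS: "S \<in> SS" for S
  proof -
    let ?l = "sorted_list_of_set S"
    define ts where "ts = map \<tau> ?l"
    have lts: "length ts = Suc k" unfolding ts_def using Sfacts(3)[OF SSS] by simp
    have tsn: "ts ! a = \<tau> (?l ! a)" if "a \<le> k" for a
      unfolding ts_def using Sfacts(3)[OF SSS] that by simp
    have sts: "sorted_wrt (<) ts" unfolding ts_def sorted_wrt_map
    proof (rule sorted_wrt_mono_rel[OF _ Sfacts(5)[OF SSS]])
      fix x y assume "x \<in> set ?l" "y \<in> set ?l" "x < y"
      then show "\<tau> x < \<tau> y" using Sfacts(2,4)[OF SSS] by (intro tau_less) auto
    qed
    have sets01: "set ts \<subseteq> {0..1}" unfolding ts_def using Sfacts(2,4)[OF SSS] tau01 by auto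
    have ind: "P.indep_vars (\<lambda>_. borel) (\<lambda>a \<omega>. X (ts ! Suc a) \<omega> - X (ts ! a) \<omega>) {..<k}"
      using D(3)[OF sts sets01] lts by simp
    have fac: "measure M {\<omega>\<in>space M. dist (X (ts ! Suc a) \<omega>) (X (ts ! a) \<omega>) \<le> 2*\<rho>}
        \<le> A / (real (?l ! Suc a) - real (?l ! a))" if a: "a < k" for a
    proof -
      have e1: "?l ! a \<in> {1..T}" "?l ! Suc a \<in> {1..T}" using elem[OF SSS] a by auto
      have lt': "?l ! a < ?l ! Suc a" by (rule lt[OF SSS a])
      have "measure M {\<omega>\<in>space M. dist (X (ts ! Suc a) \<omega>) (X (ts ! a) \<omega>) \<le> 2*\<rho>}
          \<le> (2*\<rho>)\<^sup>2 / (ts ! Suc a - ts ! a)"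
      proof (rule bm_incr[OF BM])
        show "0 \<le> ts ! a" "ts ! Suc a \<le> 1" using tau01 e1 tsn a by auto
        show "ts ! a < ts ! Suc a" using tsn a tau_less e1 lt' by auto
        show "0 \<le> 2 * \<rho>" unfolding \<rho>_def by simp
      qed
      also have "ts ! Suc a - ts ! a = (real (?l ! Suc a) - real (?l ! a)) / real T"
        using tsn a e1 by (simp add: tau_diff)
      also have "(2*\<rho>)\<^sup>2 / \<dots> = A / (real (?l ! Suc a) - real (?l ! a))"
        unfolding A_def using Tpos by (simp add: field_simps power2_eq_square)
      finally show ?thesis .
    qed
    have "measure M (F S) = (\<Prod>a\<in>{..<k}. measure M {\<omega>\<in>space M. dist (X (ts ! Suc a) \<omega>) (X (ts ! a) \<omega>) \<le> 2*\<rho>})"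
    proof (cases "k = 0")
      case True
      then show ?thesis unfolding F_def by (simp add: P.prob_space)
    next
      case False
      have Feq: "F S = (\<Inter>a\<in>{..<k}. (\<lambda>\<omega>. X (ts ! Suc a) \<omega> - X (ts ! a) \<omega>) -` cball 0 (2*\<rho>) \<inter> space M)"
      proof -
        have iff: "\<And>\<omega> a. dist (X (ts ! Suc a) \<omega>) (X (ts ! a) \<omega>) \<le> 2*\<rho> \<longleftrightarrow>
             (\<lambda>\<omega>. X (ts ! Suc a) \<omega> - X (ts ! a) \<omega>) \<omega> \<in> cball 0 (2*\<rho>)"
          by (simp only: mem_cball_0 dist_norm)
        have "F S = {\<omega>\<in>space M. \<forall>a\<in>{..<k}. dist (X (ts ! Suc a) \<omega>) (X (ts ! a) \<omega>) \<le> 2*\<rho>}"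
          unfolding F_def using tsn by auto
        then show ?thesis unfolding iff using False by blast
      qed
      have "measure M (F S) = (\<Prod>a\<in>{..<k}. measure M ((\<lambda>\<omega>. X (ts ! Suc a) \<omega> - X (ts ! a) \<omega>) -` cball 0 (2*\<rho>) \<inter> space M))"
        unfolding Feq by (rule P.indep_varsD_finite[OF ind]) (use False in auto)
      also have "\<dots> = (\<Prod>a\<in>{..<k}. measure M {\<omega>\<in>space M. dist (X (ts ! Suc a) \<omega>) (X (ts ! a) \<omega>) \<le> 2*\<rho>})"
      proof (intro prod.cong refl arg_cong[where f = "measure M"])
        fix a
        have "\<And>\<omega>. dist (X (ts ! Suc a) \<omega>) (X (ts ! a) \<omega>) \<le> 2*\<rho> \<longleftrightarrow>
             (\<lambda>\<omega>. X (ts ! Suc a) \<omega> - X (ts ! a) \<omega>) \<omega> \<in> cball 0 (2*\<rho>)"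
          by (simp only: mem_cball_0 dist_norm)
        then show "(\<lambda>\<omega>. X (ts ! Suc a) \<omega> - X (ts ! a) \<omega>) -` cball 0 (2 * \<rho>) \<inter> space M =
          {\<omega> \<in> space M. dist (X (ts ! Suc a) \<omega>) (X (ts ! a) \<omega>) \<le> 2 * \<rho>}" by blast
      qed
      finally show ?thesis .
    qed
    also have "\<dots> \<le> (\<Prod>a\<in>{..<k}. A / (real (?l ! Suc a) - real (?l ! a)))"
      by (intro prod_mono conjI fac measure_nonneg) auto
    also have "\<dots> = gp A ?l" unfolding gp_def using Sfacts(3)[OF SSS] by simp
    finally show ?thesis .
  qed
  have intFS: "integrable M (\<lambda>\<omega>. indicator (F S) \<omega> :: real)" if "S \<in> SS" for S
  proof -
    have "F S \<inter> space M = F S" unfolding F_def by auto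
    then show ?thesis using Fm[OF that]
      by (simp add: integrable_indicator_iff less_top[symmetric] P.emeasure_finite)
  qed
  have intE: "integrable M (\<lambda>\<omega>. indicator E \<omega> * c)"
    using Em by (intro integrable_mult_left) (simp add: integrable_indicator_iff less_top[symmetric] P.emeasure_finite)
  have intF: "integrable M (\<lambda>\<omega>. \<Sum>S\<in>SS. indicator (F S) \<omega> :: real)"
    by (rule Bochner_Integration.integrable_sum) (use intFS in auto)
  have "measure M E * c = (\<integral>\<omega>. indicator E \<omega> * c \<partial>M)"
    using Em sets.sets_into_space[OF Em] by (simp add: Int_absorb2)
  also have "\<dots> \<le> (\<integral>\<omega>. (\<Sum>S\<in>SS. indicator (F S) \<omega>) \<partial>M)"
    by (rule integral_mono[OF intE intF pw])
  also have "\<dots> = (\<Sum>S\<in>SS. measure M (F S))"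
  proof -
    have "(\<integral>\<omega>. (\<Sum>S\<in>SS. indicator (F S) \<omega> :: real) \<partial>M) = (\<Sum>S\<in>SS. (\<integral>\<omega>. indicator (F S) \<omega> \<partial>M))"
      by (rule Bochner_Integration.integral_sum) (use intFS in auto)
    also have "\<dots> = (\<Sum>S\<in>SS. measure M (F S))"
      using Fm sets.sets_into_space[OF Fm] by (intro sum.cong refl) (simp add: Int_absorb2)
    finally show ?thesis .
  qed
  also have "\<dots> \<le> (\<Sum>S\<in>SS. gp A (sorted_list_of_set S))"
    by (intro sum_mono indep_bound)
  also have "\<dots> \<le> real T * (A * harm T) ^ k"
    unfolding SS_def by (rule comb_top) (simp add: A_def)
  finally show ?thesis unfolding E_def c_def A_def \<rho>_def .
qed



lemma num_bound:
  fixes t \<epsilon> r P h :: real and k :: nat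
  assumes t: "t \<ge> 1" and e: "\<epsilon> > 0" and k: "k \<ge> 1" and ek: "\<epsilon> * real k \<ge> r + 3" and P: "P \<ge> 0"
    and K: "t powr (3*\<epsilon>) \<ge> real (Suc k)"
    and main: "P * (t powr (3*\<epsilon>) / real (Suc k)) ^ Suc k \<le> t * (4 * (t powr (-1/2+\<epsilon>))\<^sup>2 * t * h) ^ k"
    and h0: "0 \<le> h" and h1: "h \<le> (1 + real k) * t powr (1 / real k)"
  shows "P \<le> (4 * (1 + real k)) ^ k * real (Suc k) ^ Suc k * t powr (-(r+1))"
proof -
  have t0: "t > 0" using t by simp
  have a: "(t powr (-1/2+\<epsilon>))\<^sup>2 * t = t powr (2*\<epsilon>)"
  proof -
    have "(t powr (-1/2+\<epsilon>))\<^sup>2 = t powr (2 * (-1/2+\<epsilon>))" using t0 by (simp add: powr_power)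
    then have "(t powr (-1/2+\<epsilon>))\<^sup>2 * t = t powr (2 * (-1/2+\<epsilon>)) * t powr 1" using t0 by simp
    also have "\<dots> = t powr (2*\<epsilon>)" by (simp only: powr_add[symmetric]) (simp add: algebra_simps)
    finally show ?thesis .
  qed
  have b: "4 * (t powr (-1/2+\<epsilon>))\<^sup>2 * t * h \<le> 4 * (1 + real k) * t powr (2*\<epsilon> + 1 / real k)"
  proof -
    have "4 * (t powr (-1/2+\<epsilon>))\<^sup>2 * t * h = 4 * t powr (2*\<epsilon>) * h" using a by simp
    also have "\<dots> \<le> 4 * t powr (2*\<epsilon>) * ((1 + real k) * t powr (1 / real k))"
      by (intro mult_left_mono h1) auto
    also have "\<dots> = 4 * (1 + real k) * t powr (2*\<epsilon> + 1 / real k)" by (simp add: powr_add)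
    finally show ?thesis .
  qed
  have c: "(4 * (t powr (-1/2+\<epsilon>))\<^sup>2 * t * h) ^ k \<le> (4 * (1 + real k)) ^ k * t powr (2*\<epsilon>*real k + 1)"
  proof -
    have "(4 * (t powr (-1/2+\<epsilon>))\<^sup>2 * t * h) ^ k \<le> (4 * (1 + real k) * t powr (2*\<epsilon> + 1 / real k)) ^ k"
      by (intro power_mono b) (use h0 t in auto)
    also have "\<dots> = (4 * (1 + real k)) ^ k * (t powr (2*\<epsilon> + 1 / real k)) ^ k" by (simp add: power_mult_distrib)
    also have "(t powr (2*\<epsilon> + 1 / real k)) ^ k = t powr (real k * (2*\<epsilon> + 1 / real k))"
      using t0 by (simp add: powr_power)
    also have "real k * (2*\<epsilon> + 1 / real k) = 2*\<epsilon>*real k + 1" using k by (simp add: field_simps)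
    finally show ?thesis .
  qed
  define C0 where "C0 = (4 * (1 + real k)) ^ k"
  have C0pos: "C0 > 0" unfolding C0_def by simp
  have d: "t * (4 * (t powr (-1/2+\<epsilon>))\<^sup>2 * t * h) ^ k \<le> C0 * t powr (2*\<epsilon>*real k + 2)"
  proof -
    have "t * (4 * (t powr (-1/2+\<epsilon>))\<^sup>2 * t * h) ^ k \<le> t * (C0 * t powr (2*\<epsilon>*real k + 1))"
      unfolding C0_def by (intro mult_left_mono c) (use t in auto)
    also have "\<dots> = C0 * (t powr 1 * t powr (2*\<epsilon>*real k + 1))" using t0 by simp
    also have "\<dots> = C0 * t powr (2*\<epsilon>*real k + 2)" by (simp only: powr_add[symmetric]) (simp add: algebra_simps)
    finally show ?thesis .
  qed
  have e1: "(t powr (3*\<epsilon>) / real (Suc k)) ^ Suc k = t powr (3*\<epsilon>*real (Suc k)) / real (Suc k) ^ Suc k"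
    using t0 by (simp add: power_divide powr_power mult_ac flip: powr_add) (simp add: algebra_simps)
  define D where "D = t powr (3*\<epsilon>*real (Suc k)) / real (Suc k) ^ Suc k"
  have Dpos: "D > 0" unfolding D_def using t0 by simp
  have "P * D \<le> C0 * t powr (2*\<epsilon>*real k + 2)" unfolding D_def e1[symmetric] by (rule order.trans[OF main d])
  then have "P \<le> C0 * t powr (2*\<epsilon>*real k + 2) / D" using Dpos by (simp add: field_simps)
  also have "\<dots> = C0 * real (Suc k) ^ Suc k * (t powr (2*\<epsilon>*real k + 2) / t powr (3*\<epsilon>*real (Suc k)))"
    unfolding D_def by (simp add: field_simps)
  also have "t powr (2*\<epsilon>*real k + 2) / t powr (3*\<epsilon>*real (Suc k)) = t powr (2*\<epsilon>*real k + 2 - 3*\<epsilon>*real (Suc k))"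
    by (simp add: powr_diff)
  also have "\<dots> \<le> t powr (-(r+1))"
    by (rule powr_mono) (use t e ek in \<open>auto simp: algebra_simps\<close>)
  finally show ?thesis
    using C0pos by (simp add: C0_def mult_left_mono)
qed



lemma harm_bound:
  assumes T: "T \<ge> 1" and k: "k \<ge> 1"
  shows "harm T \<le> (1 + real k) * real T powr (1 / real k)"
proof -
  have "harm T - ln (real T) \<le> harm 1 - ln (real (1::nat))"
    by (rule euler_mascheroni_sequence_decreasing) (use T in auto)
  then have h1: "harm T \<le> 1 + ln (real T)" by (simp add: harm_expand)
  have "ln (real T) \<le> real T powr (1 / real k) / (1 / real k)"
    by (rule ln_powr_bound) (use T k in auto)
  then have h2: "ln (real T) \<le> real k * real T powr (1 / real k)" by (simp add: mult.commute)
  have h3: "1 \<le> real T powr (1 / real k)" using T k by (simp add: ge_one_powr_ge_zero)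
  show ?thesis using h1 h2 h3 by (simp add: algebra_simps)
qed

lemma E_meas:
  fixes X Y :: "real \<Rightarrow> 'w \<Rightarrow> real \<times> real"
  assumes XM: "\<And>t. t\<in>{0..1} \<Longrightarrow> X t \<in> borel_measurable M" and YM: "\<And>t. t\<in>{0..1} \<Longrightarrow> Y t \<in> borel_measurable M"
    and T: "T \<ge> 1" and j: "j \<in> {1..T}"
  shows "{\<omega>\<in>space M. K \<le> real (card (close_set X Y T \<epsilon> j \<omega>))} \<in> sets M"
proof -
  define \<rho> where "\<rho> = real T powr (-1/2+\<epsilon>)"
  define \<tau> where "\<tau> = (\<lambda>i::nat. real (i-1) / real T)"
  define G where "G = (\<lambda>i. {\<omega>\<in>space M. dist (X (\<tau> i) \<omega>) (Y (\<tau> j) \<omega>) \<le> \<rho>})"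
  have Tpos: "real T > 0" using T by simp
  have tau01: "\<tau> i \<in> {0..1}" if "i \<in> {1..T}" for i
    using that Tpos by (auto simp: \<tau>_def field_simps)
  have Xm: "X (\<tau> i) \<in> borel_measurable M" if "i \<in> {1..T}" for i using XM tau01 that by blast
  have Ym: "Y (\<tau> j) \<in> borel_measurable M" using YM tau01 j by blast
  have Gm: "G i \<in> sets M" if "i \<in> {1..T}" for i unfolding G_def by (rule meas_dist_le[OF Xm[OF that] Ym])
  have cs: "close_set X Y T \<epsilon> j \<omega> = {i\<in>{1..T}. dist (X (\<tau> i) \<omega>) (Y (\<tau> j) \<omega>) \<le> \<rho>}" for \<omega>
    unfolding close_set_def \<tau>_def \<rho>_def ..
  have card_eq: "real (card (close_set X Y T \<epsilon> j \<omega>)) = (\<Sum>i\<in>{1..T}. indicator (G i) \<omega>)" if "\<omega> \<in> space M" for \<omega>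
  proof -
    have "real (card (close_set X Y T \<epsilon> j \<omega>)) = (\<Sum>i\<in>{1..T}. if dist (X (\<tau> i) \<omega>) (Y (\<tau> j) \<omega>) \<le> \<rho> then 1 else 0)"
      unfolding cs by (rule card_filter_sum) simp
    also have "\<dots> = (\<Sum>i\<in>{1..T}. indicator (G i) \<omega>)"
      by (intro sum.cong refl) (simp add: G_def that indicator_def)
    finally show ?thesis .
  qed
  have hm: "(\<lambda>\<omega>. \<Sum>i\<in>{1..T}. indicator (G i) \<omega> :: real) \<in> borel_measurable M"
    by (intro borel_measurable_sum borel_measurable_indicator Gm) auto
  have E_eq: "{\<omega>\<in>space M. K \<le> real (card (close_set X Y T \<epsilon> j \<omega>))} = {\<omega>\<in>space M. K \<le> (\<Sum>i\<in>{1..T}. indicator (G i) \<omega>)}"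
    using card_eq by auto
  show ?thesis unfolding E_eq using hm by measurable
qed

lemma pairs_sub:
  assumes T: "T \<ge> 1"
    and H: "real T powr (1 + 3 * \<epsilon>) \<le> real (card (close_pairs X Y T \<epsilon> \<omega>))"
  shows "\<exists>j\<in>{1..T}. real T powr (3 * \<epsilon>) \<le> real (card (close_set X Y T \<epsilon> j \<omega>))"
proof (rule ccontr)
  assume "\<not> ?thesis"
  then have lt: "\<And>j. j \<in> {1..T} \<Longrightarrow> real (card (close_set X Y T \<epsilon> j \<omega>)) < real T powr (3 * \<epsilon>)"
    by force
  have sub: "close_pairs X Y T \<epsilon> \<omega> \<subseteq> (\<Union>j\<in>{1..T}. (\<lambda>i. (i, j)) ` close_set X Y T \<epsilon> j \<omega>)"
    unfolding close_pairs_def close_set_def by auto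
  have "card (close_pairs X Y T \<epsilon> \<omega>) \<le> card (\<Union>j\<in>{1..T}. (\<lambda>i. (i, j)) ` close_set X Y T \<epsilon> j \<omega>)"
    by (rule card_mono[OF _ sub]) (auto simp: close_set_def)
  also have "\<dots> \<le> (\<Sum>j\<in>{1..T}. card ((\<lambda>i. (i, j)) ` close_set X Y T \<epsilon> j \<omega>))"
    by (rule card_UN_le) simp
  also have "\<dots> \<le> (\<Sum>j\<in>{1..T}. card (close_set X Y T \<epsilon> j \<omega>))"
    by (intro sum_mono card_image_le) (auto simp: close_set_def)
  finally have "real (card (close_pairs X Y T \<epsilon> \<omega>)) \<le> (\<Sum>j\<in>{1..T}. real (card (close_set X Y T \<epsilon> j \<omega>)))"
    by (simp flip: of_nat_sum)
  also have "\<dots> < (\<Sum>j\<in>{1..T}. real T powr (3 * \<epsilon>))"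
    by (rule sum_strict_mono) (use T lt in auto)
  also have "\<dots> = real T powr (1 + 3 * \<epsilon>)"
    using T by (simp add: powr_add)
  finally show False using H by simp
qed

theorem mainTheorem16:
  fixes r \<epsilon> :: real
  assumes "r > 0" and "\<epsilon> > 0"
  shows "\<exists>C::real. \<forall>(T::nat) j (M::'w measure) X Y x y.
     T \<ge> 1 \<longrightarrow> j \<in> {1..T} \<longrightarrow> indep_planar_BMs M X Y x y \<longrightarrow>
       measure M {\<omega> \<in> space M. real (card (close_set X Y T \<epsilon> j \<omega>)) \<ge> real T powr (3 * \<epsilon>)}
         \<le> C * real T powr (- r) \<and>
       measure M {\<omega> \<in> space M. real (card (close_pairs X Y T \<epsilon> \<omega>)) \<ge> real T powr (1 + 3 * \<epsilon>)}
         \<le> C * real T powr (- r)"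
proof -
  have r: "r > 0" and e: "\<epsilon> > 0" using assms by auto
  define k where "k = max 1 (nat \<lceil>(r + 3) / \<epsilon>\<rceil>)"
  have k1: "k \<ge> 1" unfolding k_def by simp
  have ek: "\<epsilon> * real k \<ge> r + 3"
  proof -
    have "(r + 3) / \<epsilon> \<le> real (nat \<lceil>(r + 3) / \<epsilon>\<rceil>)" by linarith
    also have "\<dots> \<le> real k" unfolding k_def by simp
    finally show ?thesis using e by (simp add: field_simps)
  qed
  define C0 where "C0 = (4 * (1 + real k)) ^ k * real (Suc k) ^ Suc k"
  define B where "B = real (Suc k) powr ((r + 1) / (3 * \<epsilon>))"
  define C where "C = max C0 B"
  have Bj: "measure M {\<omega> \<in> space M. real (card (close_set X Y T \<epsilon> j \<omega>)) \<ge> real T powr (3 * \<epsilon>)}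
      \<le> C * real T powr (-(r+1))"
    if T: "T \<ge> 1" and j: "j \<in> {1..T}" and BMs: "indep_planar_BMs M X Y x y"
    for T j :: nat and M :: "'w measure" and X Y :: "real \<Rightarrow> 'w \<Rightarrow> real \<times> real" and x y :: "real \<times> real"
  proof -
    have BX: "planar_BM M X x" and BY: "planar_BM M Y y" using BMs unfolding indep_planar_BMs_def by auto
    note DX = planar_BM_D[OF BX] and DY = planar_BM_D[OF BY]
    interpret P: prob_space M by (rule DX(1))
    let ?P = "measure M {\<omega> \<in> space M. real (card (close_set X Y T \<epsilon> j \<omega>)) \<ge> real T powr (3 * \<epsilon>)}"
    have t1: "real T \<ge> 1" using T by simp
    have Cpos: "C \<ge> C0" "C \<ge> B" unfolding C_def by auto
    show ?thesis
    proof (cases "real T powr (3 * \<epsilon>) \<ge> real (Suc k)")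
      case True
      have main: "?P * (real T powr (3 * \<epsilon>) / real (Suc k)) ^ Suc k
          \<le> real T * (4 * (real T powr (-1/2+\<epsilon>))\<^sup>2 * real T * harm T) ^ k"
        by (rule key_j[OF BX DY(2) T j True])
      have "?P \<le> C0 * real T powr (-(r+1))"
        unfolding C0_def
        by (rule num_bound[OF t1 e k1 ek measure_nonneg True main harm_nonneg' harm_bound[OF T k1]])
      also have "\<dots> \<le> C * real T powr (-(r+1))" using Cpos by (intro mult_right_mono) auto
      finally show ?thesis .
    next
      case False
      have "real T powr (r + 1) = (real T powr (3 * \<epsilon>)) powr ((r + 1) / (3 * \<epsilon>))"
        using e by (simp add: powr_powr)
      also have "\<dots> \<le> real (Suc k) powr ((r + 1) / (3 * \<epsilon>))"
        using False e r by (intro powr_mono2) auto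
      finally have TB: "real T powr (r + 1) \<le> B" unfolding B_def .
      have "?P \<le> 1" by (rule P.prob_le_1)
      also have "1 = real T powr (r + 1) * real T powr (-(r+1))"
        using t1 by (simp add: powr_add[symmetric])
      also have "\<dots> \<le> C * real T powr (-(r+1))"
        using TB Cpos by (intro mult_right_mono) auto
      finally show ?thesis .
    qed
  qed
  show ?thesis
  proof (intro exI allI impI conjI)
    fix T j :: nat and M :: "'w measure" and X Y :: "real \<Rightarrow> 'w \<Rightarrow> real \<times> real" and x y :: "real \<times> real"
    assume T: "T \<ge> 1" and j: "j \<in> {1..T}" and BMs: "indep_planar_BMs M X Y x y"
    have t1: "real T \<ge> 1" using T by simp
    have "C0 \<ge> 0" unfolding C0_def by simp
    then have Cnn: "C \<ge> 0" unfolding C_def by linarith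
    have mono: "C * real T powr (-(r+1)) \<le> C * real T powr (- r)"
      using t1 Cnn by (intro mult_left_mono powr_mono) auto
    show "measure M {\<omega> \<in> space M. real (card (close_set X Y T \<epsilon> j \<omega>)) \<ge> real T powr (3 * \<epsilon>)}
         \<le> C * real T powr (- r)"
      using Bj[OF T j BMs] mono by linarith
    have BX: "planar_BM M X x" and BY: "planar_BM M Y y" using BMs unfolding indep_planar_BMs_def by auto
    note DX = planar_BM_D[OF BX] and DY = planar_BM_D[OF BY]
    interpret P: prob_space M by (rule DX(1))
    define Ej where "Ej = (\<lambda>j. {\<omega> \<in> space M. real T powr (3 * \<epsilon>) \<le> real (card (close_set X Y T \<epsilon> j \<omega>))})"
    have Ejm: "Ej j' \<in> sets M" if "j' \<in> {1..T}" for j'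
      unfolding Ej_def by (rule E_meas[OF DX(2) DY(2) T that])
    have "measure M {\<omega> \<in> space M. real (card (close_pairs X Y T \<epsilon> \<omega>)) \<ge> real T powr (1 + 3 * \<epsilon>)}
        \<le> measure M (\<Union>j'\<in>{1..T}. Ej j')"
    proof (rule P.finite_measure_mono)
      show "{\<omega> \<in> space M. real T powr (1 + 3 * \<epsilon>) \<le> real (card (close_pairs X Y T \<epsilon> \<omega>))} \<subseteq> (\<Union>j'\<in>{1..T}. Ej j')"
      proof (rule subsetI)
        fix \<omega> assume "\<omega> \<in> {\<omega> \<in> space M. real T powr (1 + 3 * \<epsilon>) \<le> real (card (close_pairs X Y T \<epsilon> \<omega>))}"
        then have sp: "\<omega> \<in> space M" and H: "real T powr (1 + 3 * \<epsilon>) \<le> real (card (close_pairs X Y T \<epsilon> \<omega>))"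
          by auto
        obtain j' where j': "j' \<in> {1..T}" "real T powr (3 * \<epsilon>) \<le> real (card (close_set X Y T \<epsilon> j' \<omega>))"
          using pairs_sub[OF T H] by blast
        then have "\<omega> \<in> Ej j'" unfolding Ej_def using sp by simp
        then show "\<omega> \<in> (\<Union>j'\<in>{1..T}. Ej j')" using j'(1) by blast
      qed
      show "(\<Union>j'\<in>{1..T}. Ej j') \<in> sets M" using Ejm by auto
    qed
    also have "\<dots> \<le> (\<Sum>j'\<in>{1..T}. measure M (Ej j'))"
      by (rule P.finite_measure_subadditive_finite) (use Ejm in auto)
    also have "\<dots> \<le> (\<Sum>j'\<in>{1..T}. C * real T powr (-(r+1)))"
    proof (rule sum_mono)
      fix j' assume "j' \<in> {1..T}"
      then show "measure M (Ej j') \<le> C * real T powr (-(r+1))" unfolding Ej_def by (rule Bj[OF T _ BMs])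
    qed
    also have "\<dots> = C * (real T * real T powr (-(r+1)))" by simp
    also have "real T * real T powr (-(r+1)) = real T powr (- r)"
    proof -
      have "real T * real T powr (-(r+1)) = real T powr 1 * real T powr (-(r+1))" using t1 by simp
      also have "\<dots> = real T powr (1 + -(r+1))" by (simp only: powr_add[symmetric])
      also have "1 + -(r+1) = - r" by simp
      finally show ?thesis .
    qed
    finally show "measure M {\<omega> \<in> space M. real (card (close_pairs X Y T \<epsilon> \<omega>)) \<ge> real T powr (1 + 3 * \<epsilon>)}
         \<le> C * real T powr (- r)" .
  qed
qed

end
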